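(* Let $\mathbb{F}$ be a field with $\mathrm{char}(\mathbb{F})\neq 2,3$. Let $I$ be a non-zero ideal of $\hat{\mathcal{H}}$ contained in $J$, and let $x$ be a non-zero element of $I$ of minimal $J$-degree, with $p$-level $3k$. Then $I$ has codimension $2(k-1)$ in $J$.
   Context: Notation: $\mathbb{N}=\{1,2,3,\dots\}$, $3\mathbb{N}=\{3,6,9,\dots\}$; for $r\in\mathbb{Z}$, $\bar r=r+3\mathbb{Z}\in\mathbb{Z}_3$. The algebra $\hat{\mathcal{H}}$ is the commutative $\mathbb{F}$-algebra with basis $\{a_i:i\in\mathbb{Z}\}\cup\{s_j:j\in\mathbb{N}\}\cup\{p_{\bar r,k}:\bar r\in\{\bar1,\bar2\},\ k\in 3\mathbb{N}\}$, where $s_0=0$, $p_{\bar r,j}=0$ for all $\bar r$ whenever $j\notin 3\mathbb{N}$, $p_{\bar 0,j}=-p_{\bar1,j}-p_{\bar2,j}$, $z_{\bar r,j}=p_{\bar r+\bar1,j}-p_{\bar r-\bar1,j}$, and for $i,i'\in\mathbb{Z}$, $j,l\in\mathbb{N}$, $h,k\in3\mathbb{N}$, $\bar r,\bar t\in\mathbb{Z}_3$: (H1) $a_ia_{i'}=\tfrac12(a_i+a_{i'})+s_{|i-i'|}+z_{\bar\imath,|i-i'|}$; (H2) $a_is_j=-\tfrac34a_i+\tfrac38(a_{i-j}+a_{i+j})+\tfrac32 s_j-z_{\bar\imath,j}$; (H3) $a_ip_{\bar r,k}=\tfrac32p_{\bar r,k}-p_{-(\bar\imath+\bar r),k}$;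 (H4) $s_js_l=\tfrac34(s_j+s_l)-\tfrac38(s_{|j-l|}+s_{j+l})$; (H5) $s_jp_{\bar r,k}=\tfrac34(p_{\bar r,j}+p_{\bar r,k})-\tfrac38(p_{\bar r,|j-k|}+p_{\bar r,j+k})$; (H6) $p_{\bar r,h}p_{\bar t,k}=\tfrac14(z_{-(\bar r+\bar t),h}+z_{-(\bar r+\bar t),k})-\tfrac18(z_{-(\bar r+\bar t),|h-k|}+z_{-(\bar r+\bar t),h+k})$. $J=\langle p_{\bar1,j},p_{\bar2,j}:j\in3\mathbb{N}\rangle$ (an ideal). Every non-zero $x\in J$ is uniquely $x=\sum_{j\in3\mathbb{N},\,j\le 3m}\sum_{\bar r\in\{\bar1,\bar2\}}\beta_{\bar r,j}p_{\bar r,j}$ with $\beta_{\bar r,3m}\neq0$ for some $\bar r$; its $p$-level is $3m$ and its $J$-degree is $3m+\sum_{r\in\{1,2\},\ \beta_{\bar r,3m}\neq0}\tfrac r4$. *)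

theory Defs
  imports Complex_Main "HOL-Library.Poly_Mapping"
begin

text \<open>Basis indices of the algebra H-hat:
  A i   stands for a_i (i an integer),
  S j   stands for s_j (only j >= 1 is a basis element),
  P r k stands for p_{r,k} (only r in {1,2}, k in 3N is a basis element).\<close>
datatype hidx = A int | S nat | P nat nat

definition valid_idx :: "hidx \<Rightarrow> bool" where
  "valid_idx b = (case b of A i \<Rightarrow> True | S j \<Rightarrow> j \<ge> 1
                   | P r k \<Rightarrow> (r = 1 \<or> r = 2) \<and> 3 dvd k \<and> k > 0)"

type_synonym 'a helt = "hidx \<Rightarrow>\<^sub>0 'a"

definition Hhat :: "'a::field helt set" where
  "Hhat = {f. \<forall>b\<in>Poly_Mapping.keys f. valid_idx b}"

definition hsc :: "'a::field \<Rightarrow> 'a helt \<Rightarrow> 'a helt" where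
  "hsc c f = Poly_Mapping.map (\<lambda>x. c * x) f"

text \<open>The named elements a_i, s_j (with s_0 = 0), p_{r,j} (r taken mod 3,
  p_{r,j} = 0 for j not in 3N, p_0 = - p_1 - p_2) and z_{r,j}.\<close>
definition ha :: "int \<Rightarrow> 'a::field helt" where
  "ha i = Poly_Mapping.single (A i) 1"

definition hs :: "nat \<Rightarrow> 'a::field helt" where
  "hs j = (if j = 0 then 0 else Poly_Mapping.single (S j) 1)"

definition hp :: "int \<Rightarrow> nat \<Rightarrow> 'a::field helt" where
  "hp r j = (if j = 0 \<or> \<not> (3 dvd j) then 0
             else if r mod 3 = 1 then Poly_Mapping.single (P 1 j) 1
             else if r mod 3 = 2 then Poly_Mapping.single (P 2 j) 1
             else - Poly_Mapping.single (P 1 j) 1 - Poly_Mapping.single (P 2 j) 1)"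

definition hz :: "int \<Rightarrow> nat \<Rightarrow> 'a::field helt" where
  "hz r j = hp (r + 1) j - hp (r - 1) j"

text \<open>Products of basis elements, rules (H1)-(H6) (and their commuted versions).\<close>
fun bprod :: "hidx \<Rightarrow> hidx \<Rightarrow> 'a::field helt" where
  "bprod (A i) (A i') = hsc (1/2) (ha i + ha i') + hs (nat \<bar>i - i'\<bar>) + hz i (nat \<bar>i - i'\<bar>)"
| "bprod (A i) (S j) = hsc (-3/4) (ha i) + hsc (3/8) (ha (i - int j) + ha (i + int j))
      + hsc (3/2) (hs j) - hz i j"
| "bprod (S j) (A i) = hsc (-3/4) (ha i) + hsc (3/8) (ha (i - int j) + ha (i + int j))
      + hsc (3/2) (hs j) - hz i j"
| "bprod (A i) (P r k) = hsc (3/2) (hp (int r) k) - hp (- (i + int r)) k"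
| "bprod (P r k) (A i) = hsc (3/2) (hp (int r) k) - hp (- (i + int r)) k"
| "bprod (S j) (S l) = hsc (3/4) (hs j + hs l) - hsc (3/8) (hs (nat \<bar>int j - int l\<bar>) + hs (j + l))"
| "bprod (S j) (P r k) = hsc (3/4) (hp (int r) j + hp (int r) k)
      - hsc (3/8) (hp (int r) (nat \<bar>int j - int k\<bar>) + hp (int r) (j + k))"
| "bprod (P r k) (S j) = hsc (3/4) (hp (int r) j + hp (int r) k)
      - hsc (3/8) (hp (int r) (nat \<bar>int j - int k\<bar>) + hp (int r) (j + k))"
| "bprod (P r h) (P t k) =
      hsc (1/4) (hz (- (int r + int t)) h + hz (- (int r + int t)) k)
      - hsc (1/8) (hz (- (int r + int t)) (nat \<bar>int h - int k\<bar>) + hz (- (int r + int t)) (h + k))"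

definition hmul :: "'a::field helt \<Rightarrow> 'a helt \<Rightarrow> 'a helt" where
  "hmul f g = (\<Sum>b\<in>Poly_Mapping.keys f. \<Sum>c\<in>Poly_Mapping.keys g. hsc (Poly_Mapping.lookup f b * Poly_Mapping.lookup g c) (bprod b c))"

definition is_ideal :: "'a::field helt set \<Rightarrow> bool" where
  "is_ideal I \<longleftrightarrow> I \<subseteq> Hhat \<and> 0 \<in> I \<and> (\<forall>x\<in>I. \<forall>y\<in>I. x + y \<in> I)
     \<and> (\<forall>c. \<forall>x\<in>I. hsc c x \<in> I) \<and> (\<forall>h\<in>Hhat. \<forall>x\<in>I. hmul h x \<in> I)"

definition Jid :: "'a::field helt set" where
  "Jid = \<Inter> {I. is_ideal I \<and> (\<forall>r\<in>{1,2}. \<forall>j. 3 dvd j \<and> j > 0 \<longrightarrow> hp (int r) j \<in> I)}"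

definition plevel :: "'a::field helt \<Rightarrow> nat" where
  "plevel x = Max {k. Poly_Mapping.lookup x (P 1 k) \<noteq> 0 \<or> Poly_Mapping.lookup x (P 2 k) \<noteq> 0}"

definition jdeg :: "'a::field helt \<Rightarrow> real" where
  "jdeg x = real (plevel x)
     + (if Poly_Mapping.lookup x (P 1 (plevel x)) \<noteq> 0 then 1/4 else 0)
     + (if Poly_Mapping.lookup x (P 2 (plevel x)) \<noteq> 0 then 2/4 else 0)"

text \<open>I has codimension n in J (I a subspace of J): dim (J / I) = n, i.e. there are
  n vectors of J that are linearly independent modulo I and span J modulo I.\<close>
definition has_codim :: "nat \<Rightarrow> 'a::field helt set \<Rightarrow> 'a helt set \<Rightarrow> bool" where
  "has_codim n I W \<longleftrightarrow> (\<exists>v :: nat \<Rightarrow> 'a helt.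
      (\<forall>i<n. v i \<in> W)
    \<and> W = {y + (\<Sum>i<n. hsc (c i) (v i)) | y c. y \<in> I}
    \<and> (\<forall>c. (\<Sum>i<n. hsc (c i) (v i)) \<in> I \<longrightarrow> (\<forall>i<n. c i = 0)))"

end

theory Submission
  imports Defs
begin


lemma lookup_hsc[simp]: "Poly_Mapping.lookup (hsc c f) b = c * Poly_Mapping.lookup f b"
  by (simp add: hsc_def Poly_Mapping.map.rep_eq when_def)

lemma hsc_add_left: "hsc (a + b) f = hsc a f + hsc b f"
  by (rule poly_mapping_eqI) (simp add: lookup_add algebra_simps)
lemma hsc_add_right: "hsc a (f + g) = hsc a f + hsc a g"
  by (rule poly_mapping_eqI) (simp add: lookup_add algebra_simps)
lemma hsc_diff_right: "hsc a (f - g) = hsc a f - hsc a g"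
  by (rule poly_mapping_eqI) (simp add: lookup_minus algebra_simps)
lemma hsc_hsc: "hsc a (hsc b f) = hsc (a * b) f"
  by (rule poly_mapping_eqI) simp
lemma hsc_0[simp]: "hsc 0 f = 0"
  by (rule poly_mapping_eqI) simp
lemma hsc_zero[simp]: "hsc a 0 = 0"
  by (rule poly_mapping_eqI) simp
lemma hsc_1[simp]: "hsc 1 f = f"
  by (rule poly_mapping_eqI) simp
lemma hsc_m1: "hsc (-1) f = - f"
  by (rule poly_mapping_eqI) simp
lemma hsc_sum: "hsc a (sum g X) = (\<Sum>i\<in>X. hsc a (g i))"
  by (rule poly_mapping_eqI) (simp add: lookup_sum sum_distrib_left)
lemma keys_hsc: "Poly_Mapping.keys (hsc a f) \<subseteq> Poly_Mapping.keys f"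
  by (auto simp: in_keys_iff)
lemma hsc_single: "hsc a (Poly_Mapping.single b 1) = Poly_Mapping.single b a"
  by (rule poly_mapping_eqI) (simp add: lookup_single when_def)

lemma decomp: "f = (\<Sum>b\<in>Poly_Mapping.keys f. hsc (Poly_Mapping.lookup f b) (Poly_Mapping.single b 1))"
proof (rule poly_mapping_eqI)
  fix c
  have "Poly_Mapping.lookup (\<Sum>b\<in>Poly_Mapping.keys f. hsc (Poly_Mapping.lookup f b) (Poly_Mapping.single b 1)) c
      = (\<Sum>b\<in>Poly_Mapping.keys f. (if b = c then Poly_Mapping.lookup f b else 0))"
    by (simp add: lookup_sum lookup_single when_def if_distrib cong: if_cong)
  also have "\<dots> = Poly_Mapping.lookup f c"
    by (simp only: sum.delta finite_keys) (simp add: in_keys_iff)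
  finally show "Poly_Mapping.lookup f c = Poly_Mapping.lookup (\<Sum>b\<in>Poly_Mapping.keys f. hsc (Poly_Mapping.lookup f b) (Poly_Mapping.single b 1)) c" by simp
qed

definition Lm :: "hidx \<Rightarrow> 'a::field helt \<Rightarrow> 'a helt" where
  "Lm b x = (\<Sum>c\<in>Poly_Mapping.keys x. hsc (Poly_Mapping.lookup x c) (bprod b c))"

lemma Lm_sum: assumes "finite X" "Poly_Mapping.keys x \<subseteq> X"
  shows "Lm b x = (\<Sum>c\<in>X. hsc (Poly_Mapping.lookup x c) (bprod b c))"
  unfolding Lm_def
  by (rule sum.mono_neutral_left) (use assms in \<open>auto simp: in_keys_iff\<close>)

lemma Lm_add: "Lm b (x + y) = Lm b x + Lm b y"
proof -
  let ?S = "Poly_Mapping.keys x \<union> Poly_Mapping.keys y"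
  have "Lm b (x + y) = (\<Sum>c\<in>?S. hsc (Poly_Mapping.lookup (x+y) c) (bprod b c))"
    by (rule Lm_sum) (auto simp: keys_add)
  also have "\<dots> = (\<Sum>c\<in>?S. hsc (Poly_Mapping.lookup x c) (bprod b c)) + (\<Sum>c\<in>?S. hsc (Poly_Mapping.lookup y c) (bprod b c))"
    by (simp add: lookup_add hsc_add_left sum.distrib)
  also have "\<dots> = Lm b x + Lm b y"
    using Lm_sum[of ?S x b] Lm_sum[of ?S y b] by simp
  finally show ?thesis .
qed

lemma Lm_hsc: "Lm b (hsc a x) = hsc a (Lm b x)"
proof -
  have "Lm b (hsc a x) = (\<Sum>c\<in>Poly_Mapping.keys x. hsc (Poly_Mapping.lookup (hsc a x) c) (bprod b c))"
    by (rule Lm_sum) (auto simp: keys_hsc)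
  then show ?thesis by (simp add: Lm_def hsc_sum hsc_hsc)
qed

lemma Lm_neg: "Lm b (- x) = - Lm b x"
  using Lm_hsc[of b "-1" x] by (simp add: hsc_m1)

lemma Lm_diff: "Lm b (x - y) = Lm b x - Lm b y"
  using Lm_add[of b x "-y"] by (simp add: Lm_neg)

lemma Lm_single: "Lm b (Poly_Mapping.single c a) = hsc a (bprod b c)"
  by (cases "a = 0") (simp_all add: Lm_def)

lemma hmul_single: "hmul (Poly_Mapping.single b 1) x = Lm b x"
  by (simp add: hmul_def Lm_def)


definition lowS :: "(hidx \<Rightarrow> bool) \<Rightarrow> 'a::field helt set" where
  "lowS Q = {f. \<forall>b\<in>Poly_Mapping.keys f. Q b}"

lemma lowS_0[simp]: "0 \<in> lowS Q" by (simp add: lowS_def)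
lemma lowS_add: "f \<in> lowS Q \<Longrightarrow> g \<in> lowS Q \<Longrightarrow> f + g \<in> lowS Q"
  unfolding lowS_def using keys_add[of f g] by blast
lemma lowS_neg: "f \<in> lowS Q \<Longrightarrow> - f \<in> lowS Q"
  unfolding lowS_def by simp
lemma lowS_diff: "f \<in> lowS Q \<Longrightarrow> g \<in> lowS Q \<Longrightarrow> f - g \<in> lowS Q"
  using lowS_add[OF _ lowS_neg, of f Q g] by simp
lemma lowS_hsc: "f \<in> lowS Q \<Longrightarrow> hsc a f \<in> lowS Q"
  unfolding lowS_def using keys_hsc[of a f] by blast
lemma lowS_sum: "(\<And>i. i \<in> X \<Longrightarrow> g i \<in> lowS Q) \<Longrightarrow> sum g X \<in> lowS Q"
  by (induction X rule: infinite_finite_induct) (auto intro: lowS_add)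
lemma lowS_single: "Q b \<Longrightarrow> Poly_Mapping.single b c \<in> lowS Q"
  unfolding lowS_def by simp
lemma lowS_mono: "f \<in> lowS Q \<Longrightarrow> (\<And>b. Q b \<Longrightarrow> Q' b) \<Longrightarrow> f \<in> lowS Q'"
  unfolding lowS_def by blast

lemma hp_lowS: "(0 < l \<Longrightarrow> 3 dvd l \<Longrightarrow> Q (P 1 l) \<and> Q (P 2 l)) \<Longrightarrow> hp r l \<in> lowS Q"
  unfolding hp_def by (auto intro!: lowS_single lowS_diff lowS_neg)

lemma hz_lowS: "(0 < l \<Longrightarrow> 3 dvd l \<Longrightarrow> Q (P 1 l) \<and> Q (P 2 l)) \<Longrightarrow> hz r l \<in> lowS Q"
  unfolding hz_def by (intro lowS_diff hp_lowS)

lemma Lm_lowS: fixes x :: "'a::field helt"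
  assumes "x \<in> lowS Q'" "\<And>c. Q' c \<Longrightarrow> (bprod b c :: 'a helt) \<in> lowS Q"
  shows "Lm b x \<in> lowS Q"
  unfolding Lm_def
proof (intro lowS_sum lowS_hsc)
  fix c assume "c \<in> Poly_Mapping.keys x"
  then have "Q' c" using assms(1) unfolding lowS_def by blast
  then show "(bprod b c :: 'a helt) \<in> lowS Q" by (rule assms(2))
qed

definition vP :: "nat \<Rightarrow> hidx \<Rightarrow> bool" where
  "vP n b \<longleftrightarrow> (\<exists>r l. b = P r l \<and> (r = 1 \<or> r = 2) \<and> 3 dvd l \<and> 0 < l \<and> l < n)"

abbreviation low :: "nat \<Rightarrow> 'a::field helt set" where "low n \<equiv> lowS (vP n)"
abbreviation Psp :: "'a::field helt set" where "Psp \<equiv> lowS (\<lambda>b. \<exists>n. vP n b)"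

lemma hp_low: "l < n \<Longrightarrow> hp r l \<in> low n"
  by (rule hp_lowS) (auto simp: vP_def)
lemma hp_Psp: "hp r l \<in> Psp"
  by (rule hp_lowS) (auto simp: vP_def)
lemma hz_Psp: "hz r l \<in> Psp"
  by (rule hz_lowS) (auto simp: vP_def)

lemma bprod_Psp: "bprod b (P r l) \<in> Psp"
  by (cases b) (auto intro!: lowS_add lowS_diff lowS_hsc hp_Psp hz_Psp)

lemma bprod_A_low: "l < n \<Longrightarrow> bprod (A i) (P r l) \<in> low n"
  by (auto intro!: lowS_add lowS_diff lowS_hsc hp_low)

lemma bprod_S3_low: "l < n \<Longrightarrow> bprod (S 3) (P r l) \<in> low (n + 3)"
  by (auto intro!: lowS_add lowS_diff lowS_hsc hp_low)

lemma LmA_low: "x \<in> low n \<Longrightarrow> Lm (A i) x \<in> low n"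
  by (rule Lm_lowS[where Q'="vP n"]) (auto simp: vP_def intro: bprod_A_low)

lemma LmS3_low: "x \<in> low n \<Longrightarrow> Lm (S 3) x \<in> low (n + 3)"
  by (rule Lm_lowS[where Q'="vP n"]) (auto simp: vP_def intro: bprod_S3_low)

definition ee :: "nat \<Rightarrow> nat \<Rightarrow> 'a::field helt" where
  "ee r n = Poly_Mapping.single (P r n) 1"

lemma hp_vals:
  assumes "0 < n" "3 dvd n"
  shows "hp 1 n = ee 1 n" "hp 2 n = ee 2 n" "hp (-1) n = ee 2 n" "hp (-2) n = ee 1 n"
    "hp (-3) n = - ee 1 n - ee 2 n" "hp (-4) n = ee 2 n"
  using assms by (simp_all add: hp_def ee_def)

lemma hp_int: "r = 1 \<or> r = 2 \<Longrightarrow> 0 < n \<Longrightarrow> 3 dvd n \<Longrightarrow> hp (int r) n = ee r n"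
  by (auto simp: hp_def ee_def)

definition sg :: "int \<Rightarrow> 'a::field helt \<Rightarrow> 'a helt" where
  "sg i y = hsc (3/2) y - Lm (A i) y"

lemma sg_add: "sg i (y + z) = sg i y + sg i z"
  by (simp add: sg_def Lm_add hsc_add_right)
lemma sg_hsc: "sg i (hsc a y) = hsc a (sg i y)"
  by (simp add: sg_def Lm_hsc hsc_diff_right hsc_hsc mult.commute)
lemma sg_diff: "sg i (y - z) = sg i y - sg i z"
  by (simp add: sg_def Lm_diff hsc_diff_right)
lemma sg_low: "y \<in> low n \<Longrightarrow> sg i y \<in> low n"
  by (simp add: sg_def lowS_diff lowS_hsc LmA_low)

lemma sg_ee: "r = 1 \<or> r = 2 \<Longrightarrow> 0 < n \<Longrightarrow> 3 dvd n \<Longrightarrow> sg i (ee r n :: 'a::field helt) = hp (- (i + int r)) n"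
proof -
  assume a: "r = 1 \<or> r = 2" "0 < n" "3 dvd n"
  have "Lm (A i) (ee r n :: 'a helt) = bprod (A i) (P r n)"
    by (simp add: ee_def Lm_single)
  also have "\<dots> = hsc (3/2) (ee r n) - hp (- (i + int r)) n"
    using a by (simp add: hp_int)
  finally show ?thesis by (simp add: sg_def)
qed


lemma ha_Hhat: "ha i \<in> Hhat" by (simp add: ha_def Hhat_def valid_idx_def)
lemma hs3_Hhat: "hs 3 \<in> Hhat" by (simp add: hs_def Hhat_def valid_idx_def)

context
  fixes I :: "'a::field helt set"
  assumes ideal: "is_ideal I"
begin

lemma I_add: "y \<in> I \<Longrightarrow> z \<in> I \<Longrightarrow> y + z \<in> I" using ideal by (simp add: is_ideal_def)
lemma I_hsc: "y \<in> I \<Longrightarrow> hsc c y \<in> I" using ideal by (simp add: is_ideal_def)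
lemma I_diff: "y \<in> I \<Longrightarrow> z \<in> I \<Longrightarrow> y - z \<in> I"
  using I_add[OF _ I_hsc[of z "-1"]] by (simp add: hsc_m1)
lemma I_sg: "y \<in> I \<Longrightarrow> sg i y \<in> I"
proof -
  assume y: "y \<in> I"
  have "hmul (ha i) y \<in> I" using ideal y ha_Hhat unfolding is_ideal_def by blast
  then have "Lm (A i) y \<in> I" by (simp add: ha_def hmul_single)
  then show ?thesis unfolding sg_def by (intro I_diff I_hsc y)
qed
lemma I_S3: "y \<in> I \<Longrightarrow> Lm (S 3) y \<in> I"
proof -
  assume y: "y \<in> I"
  have "hmul (hs 3) y \<in> I" using ideal y hs3_Hhat unfolding is_ideal_def by blast
  then show "Lm (S 3) y \<in> I" by (simp add: hs_def hmul_single)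
qed

lemma normalize:
  assumes "y \<in> I" "y - hsc g (ee r n) \<in> low n" "g \<noteq> 0"
  shows "\<exists>z\<in>I. z - ee r n \<in> low n"
proof (intro bexI)
  have "hsc (1/g) y - ee r n = hsc (1/g) (y - hsc g (ee r n))"
    using assms(3) by (simp add: hsc_diff_right hsc_hsc)
  then show "hsc (1/g) y - ee r n \<in> low n" using assms(2) by (simp add: lowS_hsc)
  show "hsc (1/g) y \<in> I" using assms(1) by (rule I_hsc)
qed

lemma swap12:
  assumes "z \<in> I" "z - ee 1 n \<in> low n" "0 < n" "3 dvd n"
  shows "\<exists>w\<in>I. w - ee 2 n \<in> low n"
proof (intro bexI)
  have "sg 0 z - ee 2 n = sg 0 (z - ee 1 n)"
    using assms(3,4) by (simp add: sg_diff sg_ee hp_vals)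
  then show "sg 0 z - ee 2 n \<in> low n" using assms(2) by (simp add: sg_low)
  show "sg 0 z \<in> I" using assms(1) by (rule I_sg)
qed

lemma swap21:
  assumes "z \<in> I" "z - ee 2 n \<in> low n" "0 < n" "3 dvd n"
  shows "\<exists>w\<in>I. w - ee 1 n \<in> low n"
proof (intro bexI)
  have "sg 0 z - ee 1 n = sg 0 (z - ee 2 n)"
    using assms(3,4) by (simp add: sg_diff sg_ee hp_vals)
  then show "sg 0 z - ee 1 n \<in> low n" using assms(2) by (simp add: sg_low)
  show "sg 0 z \<in> I" using assms(1) by (rule I_sg)
qed

lemma base:
  assumes c3: "(3::'a) \<noteq> 0"
    and x: "x \<in> I" "x - (hsc al (ee 1 n) + hsc be (ee 2 n)) \<in> low n"
    and ab: "al \<noteq> 0 \<or> be \<noteq> 0" and n: "0 < n" "3 dvd n"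
  shows "\<exists>z\<in>I. z - ee 1 n \<in> low n" "\<exists>z\<in>I. z - ee 2 n \<in> low n"
proof -
  define L where "L = hsc al (ee 1 n) + hsc be (ee 2 n :: 'a helt)"
  have xL: "x - L \<in> low n" using x(2) by (simp add: L_def)
  have s1: "sg 1 L = hsc al (ee 1 n) + hsc be (- ee 1 n - ee 2 n)"
    using n by (simp add: L_def sg_add sg_hsc sg_ee hp_vals)
  have s2: "sg 2 L = hsc al (- ee 1 n - ee 2 n) + hsc be (ee 2 n)"
    using n by (simp add: L_def sg_add sg_hsc sg_ee hp_vals)
  have e1: "L + sg 1 L = hsc (2*al - be) (ee 1 n)"
    by (rule poly_mapping_eqI) (simp only: s1, simp add: L_def lookup_add lookup_minus ee_def lookup_single when_def algebra_simps)
  have e2: "L + sg 2 L = hsc (2*be - al) (ee 2 n)"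
    by (rule poly_mapping_eqI) (simp only: s2, simp add: L_def lookup_add lookup_minus ee_def lookup_single when_def algebra_simps)
  have y1: "(x + sg 1 x) - hsc (2*al - be) (ee 1 n) \<in> low n"
  proof -
    have eq: "(x + sg 1 x) - hsc (2*al - be) (ee 1 n) = (x - L) + sg 1 (x - L)"
      unfolding e1[symmetric] by (simp add: sg_diff algebra_simps)
    show ?thesis unfolding eq by (intro lowS_add sg_low xL)
  qed
  have y2: "(x + sg 2 x) - hsc (2*be - al) (ee 2 n) \<in> low n"
  proof -
    have eq: "(x + sg 2 x) - hsc (2*be - al) (ee 2 n) = (x - L) + sg 2 (x - L)"
      unfolding e2[symmetric] by (simp add: sg_diff algebra_simps)
    show ?thesis unfolding eq by (intro lowS_add sg_low xL)
  qed
  have yI: "x + sg 1 x \<in> I" "x + sg 2 x \<in> I" using x(1) by (simp_all add: I_add I_sg)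
  have "(\<exists>z\<in>I. z - ee 1 n \<in> low n) \<and> (\<exists>z\<in>I. z - ee 2 n \<in> low n)"
  proof (cases "2*al - be = 0")
    case False
    then obtain z where "z \<in> I" "z - ee 1 n \<in> low n" using normalize[OF yI(1) y1] by blast
    then show ?thesis using swap12 n by blast
  next
    case True
    then have "be = 2 * al" by simp
    then have "2*be - al = 3 * al" by simp
    moreover have "al \<noteq> 0" using ab \<open>be = 2 * al\<close> by auto
    ultimately have "2*be - al \<noteq> 0" using c3 by simp
    then obtain z where "z \<in> I" "z - ee 2 n \<in> low n" using normalize[OF yI(2) y2] by blast
    then show ?thesis using swap21 n by blast
  qed
  then show "\<exists>z\<in>I. z - ee 1 n \<in> low n" "\<exists>z\<in>I. z - ee 2 n \<in> low n" by blast+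
qed


lemma Submission_step:
  assumes c2: "(2::'a) \<noteq> 0" and c3: "(3::'a) \<noteq> 0"
    and z: "z \<in> I" "z - ee r n \<in> low n" and n: "0 < n" "3 dvd n" and r: "r = 1 \<or> r = 2"
  shows "\<exists>w\<in>I. w - ee r (n + 3) \<in> low (n + 3)"
proof (rule normalize)
  show "Lm (S 3) z \<in> I" using z(1) by (rule I_S3)
  have c8: "(8::'a) \<noteq> 0"
  proof -
    have "(8::'a) = 2 * 2 * 2" by simp
    then show ?thesis using c2 by (metis mult_eq_0_iff)
  qed
  then show "- 3 / 8 \<noteq> (0::'a)" using c3 by simp
  have en: "ee r (n + 3) = (hp (int r) (3 + n) :: 'a helt)"
    using n r by (simp add: hp_int add.commute)
  have "Lm (S 3) (ee r n) - hsc (- 3 / 8) (ee r (n + 3)) =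
     (hsc (3/4) (hp (int r) 3 + hp (int r) n)
      - hsc (3/8) (hp (int r) (nat \<bar>int 3 - int n\<bar>) + hp (int r) (3 + n)))
      - hsc (- 3 / 8) (hp (int r) (3 + n) :: 'a helt)"
    unfolding en by (simp add: ee_def Lm_single)
  also have "\<dots> = hsc (3/4) (hp (int r) 3 + hp (int r) n)
      - hsc (3/8) (hp (int r) (nat \<bar>int 3 - int n\<bar>))"
    by (rule poly_mapping_eqI) (simp add: lookup_add lookup_minus algebra_simps)
  finally have eqq: "Lm (S 3) (ee r n) - hsc (- 3 / 8) (ee r (n + 3)) = (hsc :: 'a \<Rightarrow> _) (3/4) (hp (int r) 3 + hp (int r) n)
      - hsc (3/8) (hp (int r) (nat \<bar>int 3 - int n\<bar>))" .
  have "hsc (3/4) (hp (int r) 3 + hp (int r) n)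
      - hsc (3/8) (hp (int r) (nat \<bar>int 3 - int n\<bar>)) \<in> (low (n + 3) :: 'a helt set)"
    using n by (auto intro!: lowS_add lowS_diff lowS_hsc hp_low)
  then have "(Lm (S 3) (ee r n) - hsc (- 3 / 8) (ee r (n + 3)) :: 'a helt) \<in> low (n + 3)"
    unfolding eqq .
  moreover have eq2: "Lm (S 3) z - hsc (- 3 / 8) (ee r (n + 3)) =
     Lm (S 3) (z - ee r n) + (Lm (S 3) (ee r n) - hsc (- 3 / 8) (ee r (n + 3)))"
    by (simp add: Lm_diff)
  ultimately show "Lm (S 3) z - hsc (- 3 / 8) (ee r (n + 3)) \<in> low (n + 3)"
    unfolding eq2 using z(2) by (intro lowS_add LmS3_low)
qed

lemma lead:
  assumes c2: "(2::'a) \<noteq> 0" and c3: "(3::'a) \<noteq> 0" and r: "r = 1 \<or> r = 2"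
    and k: "1 \<le> k" and b: "\<exists>z\<in>I. z - ee r (3*k) \<in> low (3*k)" and m: "k \<le> m"
  shows "\<exists>z\<in>I. z - ee r (3*m) \<in> low (3*m)"
  using m
proof (induction m rule: dec_induct)
  case base then show ?case by (rule b)
next
  case (step m)
  then obtain z where "z \<in> I" "z - ee r (3*m) \<in> low (3*m)" by blast
  from Submission_step[OF c2 c3 this _ _ r] step.hyps k
  have "\<exists>w\<in>I. w - ee r (3 * m + 3) \<in> low (3 * m + 3)" by simp
  then show ?case by (metis add.commute mult_Suc_right)
qed

end



lemma Jid_gen: "r = 1 \<or> r = 2 \<Longrightarrow> 3 dvd j \<Longrightarrow> 0 < j \<Longrightarrow> (hp (int r) j :: 'a::field helt) \<in> Jid"
  unfolding Jid_def by auto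
lemma Jid_add: "y \<in> Jid \<Longrightarrow> z \<in> Jid \<Longrightarrow> y + z \<in> (Jid :: 'a::field helt set)"
  unfolding Jid_def is_ideal_def by blast
lemma Jid_hsc: "y \<in> Jid \<Longrightarrow> hsc c y \<in> (Jid :: 'a::field helt set)"
  unfolding Jid_def is_ideal_def by blast
lemma Jid_0: "0 \<in> (Jid :: 'a::field helt set)"
  unfolding Jid_def is_ideal_def by blast
lemma Jid_sum: "(\<And>i. i \<in> X \<Longrightarrow> g i \<in> Jid) \<Longrightarrow> sum g X \<in> (Jid :: 'a::field helt set)"
  by (induction X rule: infinite_finite_induct) (auto intro: Jid_add Jid_0)

lemma Psp_ideal: "is_ideal (Psp :: 'a::field helt set)"
  unfolding is_ideal_def
proof (intro conjI ballI allI)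
  show "Psp \<subseteq> (Hhat :: 'a helt set)"
    by (auto simp: lowS_def Hhat_def vP_def valid_idx_def)
  show "(0::'a helt) \<in> Psp" by simp
  show "x + y \<in> Psp" if "x \<in> Psp" "y \<in> Psp" for x y :: "'a helt" using that by (rule lowS_add)
  show "hsc c x \<in> Psp" if "x \<in> Psp" for c and x :: "'a helt" using that by (rule lowS_hsc)
  show "hmul h x \<in> Psp" if hh: "h \<in> Hhat" and xx: "x \<in> Psp" for h x :: "'a helt"
    unfolding hmul_def
  proof (intro lowS_sum lowS_hsc)
    fix b c assume "c \<in> Poly_Mapping.keys x"
    then obtain r l where "c = P r l" using xx by (auto simp: lowS_def vP_def)
    then show "(bprod b c :: 'a helt) \<in> Psp" by (simp add: bprod_Psp)
  qed
qed

lemma Jid_Psp: "(Jid :: 'a::field helt set) \<subseteq> Psp"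
  unfolding Jid_def using Psp_ideal hp_Psp by blast

lemma low_plevel:
  fixes f :: "'a::field helt"
  assumes "f \<in> low n" "f \<noteq> 0"
  shows "plevel f < n"
proof -
  let ?K = "{k. Poly_Mapping.lookup f (P 1 k) \<noteq> 0 \<or> Poly_Mapping.lookup f (P 2 k) \<noteq> 0}"
  have sub: "?K \<subseteq> {..<n}"
  proof
    fix l assume "l \<in> ?K"
    then have "P 1 l \<in> Poly_Mapping.keys f \<or> P 2 l \<in> Poly_Mapping.keys f" by (auto simp: in_keys_iff)
    then show "l \<in> {..<n}" using assms(1) by (auto simp: lowS_def vP_def)
  qed
  obtain b where b: "b \<in> Poly_Mapping.keys f" using assms(2) by (metis ex_in_conv keys_eq_empty)
  then obtain r l where "b = P r l" "r = 1 \<or> r = 2" using assms(1) by (auto simp: lowS_def vP_def)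
  then have "l \<in> ?K" using b by (auto simp: in_keys_iff)
  then have "Max ?K \<in> ?K" using sub by (intro Max_in) (auto intro: finite_subset)
  then show ?thesis using sub by (auto simp: plevel_def)
qed

lemma jdeg_ge: "real (plevel f) \<le> jdeg f"
  by (simp add: jdeg_def)
lemma jdeg_le: "jdeg f \<le> real (plevel f) + 3/4"
  by (simp add: jdeg_def)

lemma in_low:
  fixes f :: "'a::field helt"
  assumes "f \<in> Psp" "\<And>r l. r = 1 \<or> r = 2 \<Longrightarrow> n \<le> l \<Longrightarrow> Poly_Mapping.lookup f (P r l) = 0"
  shows "f \<in> low n"
  unfolding lowS_def
proof (intro CollectI ballI)
  fix b assume b: "b \<in> Poly_Mapping.keys f"
  then obtain r l m where "b = P r l" "r = 1 \<or> r = 2" "3 dvd l" "0 < l" using assms(1) by (auto simp: lowS_def vP_def)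
  moreover have "\<not> n \<le> l"
  proof
    assume "n \<le> l"
    then have "Poly_Mapping.lookup f b = 0" using assms(2) calculation by auto
    then show False using b by (simp add: in_keys_iff)
  qed
  ultimately show "vP n b" by (auto simp: vP_def)
qed



lemma idx_eq: "(P (1 + j mod 2) (3 * (j div 2 + 1)) = P (1 + i mod 2) (3 * (i div 2 + 1))) \<longleftrightarrow> j = (i::nat)"
  by (auto, metis div_mult_mod_eq)

theorem corollary7p3:
  fixes I :: "'a::field helt set" and x :: "'a helt" and k :: nat
  assumes char2: "(2::'a) \<noteq> 0" and char3: "(3::'a) \<noteq> 0"
    and ideal: "is_ideal I" and nonzero: "I \<noteq> {0}" and sub: "I \<subseteq> Jid"
    and xI: "x \<in> I" and xnz: "x \<noteq> 0"
    and xmin: "\<forall>y\<in>I. y \<noteq> 0 \<longrightarrow> jdeg x \<le> jdeg y"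
    and level: "plevel x = 3 * k"
  shows "has_codim (2 * (k - 1)) I Jid"
proof -
  have xP: "x \<in> Psp" using xI sub Jid_Psp by blast
  define n where "n = 3 * k"
  define K where "K = {l. Poly_Mapping.lookup x (P 1 l) \<noteq> 0 \<or> Poly_Mapping.lookup x (P 2 l) \<noteq> 0}"
  define proj where "proj = (\<lambda>b. case b of P r l \<Rightarrow> l | _ \<Rightarrow> (0::nat))"
  have "K \<subseteq> proj ` Poly_Mapping.keys x"
  proof
    fix l assume "l \<in> K"
    then have "P 1 l \<in> Poly_Mapping.keys x \<or> P 2 l \<in> Poly_Mapping.keys x" by (auto simp: K_def in_keys_iff)
    then show "l \<in> proj ` Poly_Mapping.keys x" by (force simp: proj_def)
  qed
  then have finK: "finite K" by (rule finite_subset) simp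
  obtain b where b: "b \<in> Poly_Mapping.keys x" using xnz by (metis ex_in_conv keys_eq_empty)
  then obtain r l where "b = P r l" "r = 1 \<or> r = 2" using xP by (auto simp: lowS_def vP_def)
  then have "l \<in> K" using b by (auto simp: in_keys_iff K_def)
  then have "K \<noteq> {}" by blast
  then have "Max K \<in> K" using finK by (rule Max_in[rotated])
  moreover have "plevel x = Max K" by (simp add: plevel_def K_def)
  ultimately have nK: "n \<in> K" using level n_def by simp
  have geK: "l \<le> n" if "l \<in> K" for l
    using that finK \<open>plevel x = Max K\<close> level n_def by simp
  have "P 1 n \<in> Poly_Mapping.keys x \<or> P 2 n \<in> Poly_Mapping.keys x" using nK by (auto simp: K_def in_keys_iff)
  then have n0: "0 < n" "3 dvd n" using xP by (auto simp: lowS_def vP_def)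
  then have k1: "1 \<le> k" using n_def by simp
  define al where "al = Poly_Mapping.lookup x (P 1 n)"
  define be where "be = Poly_Mapping.lookup x (P 2 n)"
  have ab: "al \<noteq> 0 \<or> be \<noteq> 0" using nK by (auto simp: K_def al_def be_def)
  have eeP: "ee r l \<in> (Psp :: 'a helt set)" if "r = 1 \<or> r = 2" "0 < l" "3 dvd l" for r l
    unfolding ee_def by (rule lowS_single) (use that in \<open>auto simp: vP_def intro: exI[of _ "l+1"]\<close>)
  have xL: "x - (hsc al (ee 1 n) + hsc be (ee 2 n)) \<in> low n"
  proof (rule in_low)
    show "x - (hsc al (ee 1 n) + hsc be (ee 2 n)) \<in> Psp"
      using xP n0 by (intro lowS_diff lowS_add lowS_hsc eeP) auto
    fix r l :: nat assume r: "r = 1 \<or> r = 2" and l: "n \<le> l"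
    show "Poly_Mapping.lookup (x - (hsc al (ee 1 n) + hsc be (ee 2 n))) (P r l) = 0"
    proof (cases "l = n")
      case True
      then show ?thesis using r by (auto simp: lookup_minus lookup_add ee_def lookup_single al_def be_def)
    next
      case False
      then have "l \<notin> K" using geK l by force
      then have "Poly_Mapping.lookup x (P r l) = 0" using r by (auto simp: K_def)
      then show ?thesis using False by (auto simp: lookup_minus lookup_add ee_def lookup_single)
    qed
  qed
  have bases: "\<exists>z\<in>I. z - ee 1 n \<in> low n" "\<exists>z\<in>I. z - ee 2 n \<in> low n"
    using base[OF ideal char3 xI xL ab n0] by blast+
  have leads: "\<exists>z\<in>I. z - ee r (3*m) \<in> low (3*m)" if "r = 1 \<or> r = 2" "k \<le> m" for r m
    using that(1)
  proof
    assume "r = 1" then show ?thesis using lead[OF ideal char2 char3 _ k1 _ that(2)] bases n_def by blast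
  next
    assume "r = 2" then show ?thesis using lead[OF ideal char2 char3 _ k1 _ that(2)] bases n_def by blast
  qed
  define N where "N = 2 * (k - 1)"
  define v :: "nat \<Rightarrow> 'a helt" where "v i = ee (1 + i mod 2) (3 * (i div 2 + 1))" for i
  define M where "M = {y + (\<Sum>i<N. hsc (c i) (v i)) | y c. y \<in> I}"
  have Mintro: "y + (\<Sum>i<N. hsc (c i) (v i)) \<in> M" if "y \<in> I" for y c
    using that unfolding M_def by blast
  have I0: "0 \<in> I" using ideal by (simp add: is_ideal_def)
  have vr: "1 + i mod 2 = 1 \<or> 1 + i mod 2 = (2::nat)" for i :: nat by presburger
  have vJ: "v i \<in> Jid" for i
    unfolding v_def using hp_int[OF vr, of "3 * (i div 2 + 1)" i] Jid_gen[OF vr, of "3 * (i div 2 + 1)" i]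
    by (metis dvd_triv_left zero_less_Suc add.commute plus_1_eq_Suc nat_0_less_mult_iff zero_less_numeral)
  have M_add: "f + g \<in> M" if fM: "f \<in> M" and gM: "g \<in> M" for f g
  proof -
    obtain y1 c1 where 1: "f = y1 + (\<Sum>i<N. hsc (c1 i) (v i))" "y1 \<in> I" using fM by (auto simp: M_def)
    obtain y2 c2 where 2: "g = y2 + (\<Sum>i<N. hsc (c2 i) (v i))" "y2 \<in> I" using gM by (auto simp: M_def)
    have "f + g = (y1 + y2) + (\<Sum>i<N. hsc (c1 i + c2 i) (v i))"
      using 1 2 by (simp add: hsc_add_left sum.distrib algebra_simps)
    moreover have "y1 + y2 \<in> I" using 1 2 by (simp add: I_add ideal)
    ultimately show ?thesis using Mintro[of "y1 + y2" "\<lambda>i. c1 i + c2 i"] by simp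
  qed
  have M_hsc: "hsc a f \<in> M" if fM: "f \<in> M" for a f
  proof -
    obtain y1 c1 where 1: "f = y1 + (\<Sum>i<N. hsc (c1 i) (v i))" "y1 \<in> I" using fM by (auto simp: M_def)
    have "hsc a f = hsc a y1 + (\<Sum>i<N. hsc (a * c1 i) (v i))"
      using 1 by (simp add: hsc_add_right hsc_sum hsc_hsc)
    moreover have "hsc a y1 \<in> I" using 1 by (simp add: I_hsc ideal)
    ultimately show ?thesis using Mintro[of "hsc a y1" "\<lambda>i. a * c1 i"] by simp
  qed
  have M_diff: "f - g \<in> M" if "f \<in> M" "g \<in> M" for f g
    using M_add[OF that(1) M_hsc[OF that(2), of "-1"]] by (simp add: hsc_m1)
  have IM: "y \<in> M" if "y \<in> I" for y
  proof -
    have "y = y + (\<Sum>i<N. hsc 0 (v i))" by simp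
    then show ?thesis using that Mintro[of y "\<lambda>i. 0"] by simp
  qed
  have M0: "0 \<in> M" using IM I0 by blast
  have M_sum: "sum g X \<in> M" if "\<And>i. i \<in> X \<Longrightarrow> g i \<in> M" for g and X :: "'b set"
    using that by (induction X rule: infinite_finite_induct) (auto intro: M_add M0)
  have vM: "v j \<in> M" if "j < N" for j
  proof -
    have "(\<Sum>i<N. hsc (if i = j then 1 else 0) (v i)) = (\<Sum>i<N. if i = j then v i else 0)"
      by (rule sum.cong) auto
    also have "\<dots> = v j" using that by simp
    finally have "v j = 0 + (\<Sum>i<N. hsc (if i = j then 1 else 0) (v i))" by simp
    then show ?thesis using I0 Mintro[of 0 "\<lambda>i. if i = j then 1 else 0"] by simp
  qed
  have decM: "f \<in> M" if "\<And>b. b \<in> Poly_Mapping.keys f \<Longrightarrow> Poly_Mapping.single b 1 \<in> M" for f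
    by (subst decomp) (intro M_sum M_hsc that)
  have singles: "\<forall>r. (r = 1 \<or> r = 2) \<longrightarrow> 3 dvd l \<longrightarrow> 0 < l \<longrightarrow> ee r l \<in> M" for l
  proof (induction l rule: less_induct)
    case (less l)
    show ?case
    proof (intro allI impI)
      fix r :: nat assume r: "r = 1 \<or> r = 2" and l3: "3 dvd l" and l0: "0 < l"
      obtain m where m: "l = 3 * m" using l3 by blast
      show "ee r l \<in> M"
      proof (cases "m < k")
        case True
        define j where "j = 2 * (m - 1) + (r - 1)"
        have "j < N" using True m l0 r by (auto simp: j_def N_def)
        moreover have "v j = ee r l"
        proof -
          have "j mod 2 = r - 1" "j div 2 = m - 1" using r by (auto simp: j_def)
          then show ?thesis using r m l0 by (auto simp: v_def numeral_2_eq_2)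
        qed
        ultimately show ?thesis using vM by metis
      next
        case False
        then obtain z where z: "z \<in> I" "z - ee r (3*m) \<in> low (3*m)" using leads[OF r, of m] by (meson not_less bexE)
        have "z - ee r l \<in> M"
        proof (rule decM)
          fix b assume "b \<in> Poly_Mapping.keys (z - ee r l)"
          then obtain r' l' where "b = P r' l'" "r' = 1 \<or> r' = 2" "3 dvd l'" "0 < l'" "l' < l"
            using z m by (auto simp: lowS_def vP_def)
          then show "Poly_Mapping.single b 1 \<in> M" using less.IH by (auto simp: ee_def)
        qed
        moreover have "ee r l = z - (z - ee r l)" by simp
        ultimately show ?thesis using M_diff IM z(1) by metis
      qed
    qed
  qed
  have JM: "f \<in> M" if fJ: "f \<in> Jid" for f
  proof (rule decM)
    fix b assume bk: "b \<in> Poly_Mapping.keys f"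
    have "f \<in> Psp" using fJ Jid_Psp by blast
    then have "\<exists>n. vP n b" using bk unfolding lowS_def by blast
    then obtain r' l' where "b = P r' l'" "r' = 1 \<or> r' = 2" "3 dvd l'" "0 < l'"
      unfolding vP_def by blast
    then show "Poly_Mapping.single b 1 \<in> M" using singles by (auto simp: ee_def)
  qed
  have MJ: "f \<in> Jid" if fM: "f \<in> M" for f
  proof -
    obtain y1 c1 where 1: "f = y1 + (\<Sum>i<N. hsc (c1 i) (v i))" "y1 \<in> I" using fM by (auto simp: M_def)
    then show ?thesis using sub by (auto intro!: Jid_add Jid_sum Jid_hsc vJ)
  qed
  have indep: "\<forall>i<N. c i = 0" if cI: "(\<Sum>i<N. hsc (c i) (v i)) \<in> I" for c
  proof -
    define w where "w = (\<Sum>i<N. hsc (c i) (v i))"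
    have wlow: "w \<in> low n" unfolding w_def v_def ee_def
    proof (intro lowS_sum lowS_hsc lowS_single)
      fix i assume "i \<in> {..<N}"
      then have "3 * (i div 2 + 1) < n" by (auto simp: N_def n_def)
      then show "vP n (P (1 + i mod 2) (3 * (i div 2 + 1)))" using vr[of i] by (auto simp: vP_def)
    qed
    have w0: "w = 0"
    proof (rule ccontr)
      assume "w \<noteq> 0"
      then have "plevel w < n" using wlow low_plevel by blast
      then have "real (plevel w) + 1 \<le> real n" by linarith
      moreover have "jdeg x \<le> jdeg w" using xmin cI \<open>w \<noteq> 0\<close> w_def by blast
      moreover have "real n \<le> jdeg x" using jdeg_ge[of x] level n_def by simp
      moreover have "jdeg w \<le> real (plevel w) + 3/4" by (rule jdeg_le)
      ultimately show False by linarith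
    qed
    show ?thesis
    proof (intro allI impI)
      fix i assume i: "i < N"
      have "Poly_Mapping.lookup w (P (1 + i mod 2) (3 * (i div 2 + 1)))
          = (\<Sum>j<N. if j = i then c j else 0)"
        unfolding w_def lookup_sum by (rule sum.cong) (auto simp: v_def ee_def lookup_single when_def idx_eq, metis div_mult_mod_eq)
      also have "\<dots> = c i" using i by simp
      finally show "c i = 0" using w0 by simp
    qed
  qed
  show ?thesis unfolding has_codim_def N_def[symmetric]
  proof (intro exI[of _ v] conjI allI impI)
    show "v i \<in> Jid" for i by (rule vJ)
    show "Jid = {y + (\<Sum>i<N. hsc (c i) (v i)) | y c. y \<in> I}"
      using JM MJ unfolding M_def by blast
    show "c i = 0" if "(\<Sum>i<N. hsc (c i) (v i)) \<in> I" "i < N" for c i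
      using indep that by blast
  qed
qed

end
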